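(* Let $a, r \in \mathbb{R}$ with $a > r > 0$, and let $\digamma$ be the anchor ring in $\mathbb{E}^{3}$ parametrized by $\boldsymbol{x}(t,\varphi) = \big((a + r\cos t)\cos\varphi,\ (a + r\cos t)\sin\varphi,\ r\sin t\big)$. Then the Gauss map $\boldsymbol{n}$ of $\digamma$ is of infinite type with respect to the first fundamental form; that is, there is no integer $m \geq 1$ and no real numbers $c_{1}, \dots, c_{m}$ such that $(\Delta^{I})^{m}\boldsymbol{n} + c_{1}(\Delta^{I})^{m-1}\boldsymbol{n} + \cdots + c_{m-1}\Delta^{I}\boldsymbol{n} + c_{m}\boldsymbol{n} = \mathbf{0}$.
   Context: An anchor ring is a tube in $\mathbb{E}^3$ of constant radius $r$ around a plane circle (or an open portion of a plane circle) of radius $a>r$. With $\gamma = a + r\cos t$, its first fundamental form is $I = r^{2}dt^{2} + \gamma^{2}d\varphi^{2}$, and its Gauss map is $\boldsymbol{n} = (-\cos t\cos\varphi, -\cos t\sin\varphi, -\sin t)$. For a surface with first fundamental form $I = g_{ij}du^{i}du^{j}$, the Beltrami–Laplace operator is $\Delta^{I} f = -\frac{1}{\sqrt{g}}\big(\sqrt{g}\, g^{ij} f_{i}\big)_{j}$, where $g = \det(g_{ij})$ and $(g^{ij})$ is the inverse of $(g_{ij})$; for the anchor ring this is $\Delta^{I} = -\frac{1}{\gamma^{2}}\frac{\partial^{2}}{\partial\varphi^{2}} + \frac{\sin t}{r\gamma}\frac{\partial}{\partial t} - \frac{1}{r^{2}}\frac{\partial^{2}}{\partial t^{2}}$, applied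 componentwise to vector-valued maps. A vector-valued map $\boldsymbol{n}$ on the surface is of finite type if $\boldsymbol{n} = \boldsymbol{c} + \sum_{i=1}^{k}\boldsymbol{n}_{i}$ for a constant vector $\boldsymbol{c}$ and finitely many nonconstant eigenvectors $\boldsymbol{n}_i$ of $\Delta^{I}$; otherwise it is of infinite type. The paper uses the criterion that finite type implies a relation of the form $(\Delta^{I})^{m}\boldsymbol{n} + c_{1}(\Delta^{I})^{m-1}\boldsymbol{n} + \cdots + c_{m}\boldsymbol{n} = \mathbf{0}$. *)

theory Defs
  imports "HOL-Analysis.Analysis"
begin

definition anchor_gamma :: "real \<Rightarrow> real \<Rightarrow> real \<Rightarrow> real" where
  "anchor_gamma a r t = a + r * cos t"

definition anchor_ring :: "real \<Rightarrow> real \<Rightarrow> real \<Rightarrow> real \<Rightarrow> real^3" where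
  "anchor_ring a r t phi = vector [(a + r * cos t) * cos phi, (a + r * cos t) * sin phi, r * sin t]"

definition anchor_gauss :: "real \<Rightarrow> real \<Rightarrow> real^3" where
  "anchor_gauss t phi = vector [- cos t * cos phi, - cos t * sin phi, - sin t]"

text \<open>Beltrami--Laplace operator of the first fundamental form
  I = r^2 dt^2 + gamma^2 dphi^2 on scalar functions.\<close>
definition anchor_lap :: "real \<Rightarrow> real \<Rightarrow> (real \<Rightarrow> real \<Rightarrow> real) \<Rightarrow> real \<Rightarrow> real \<Rightarrow> real" where
  "anchor_lap a r f t phi =
     - (1 / (anchor_gamma a r t)\<^sup>2) * deriv (\<lambda>q. deriv (\<lambda>p. f t p) q) phi
     + (sin t / (r * anchor_gamma a r t)) * deriv (\<lambda>s. f s phi) t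
     - (1 / r\<^sup>2) * deriv (\<lambda>s. deriv (\<lambda>u. f u phi) s) t"

definition anchor_lapV :: "real \<Rightarrow> real \<Rightarrow> (real \<Rightarrow> real \<Rightarrow> real^3) \<Rightarrow> real \<Rightarrow> real \<Rightarrow> real^3" where
  "anchor_lapV a r F t phi = (\<chi> i. anchor_lap a r (\<lambda>s p. F s p $ i) t phi)"

end

theory Submission imports Defs "HOL-Computational_Algebra.Polynomial" begin

definition uP :: "real \<Rightarrow> real \<Rightarrow> real poly" where "uP a r = [:a, r:]"
definition qP :: "real \<Rightarrow> real \<Rightarrow> real poly \<Rightarrow> nat \<Rightarrow> real poly" where
  "qP a r p n = ([:0,1:]*p - [:1,0,-1:]*pderiv p) * uP a r + smult (real n * r) ([:1,0,-1:]*p)"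
definition TP :: "real \<Rightarrow> real \<Rightarrow> real poly \<Rightarrow> nat \<Rightarrow> real poly" where
  "TP a r p n = smult (1/r^2) (pderiv (qP a r p n) * uP a r - smult (real n * r) (qP a r p n))"
definition fam :: "real \<Rightarrow> real \<Rightarrow> real poly \<Rightarrow> nat \<Rightarrow> real \<Rightarrow> real \<Rightarrow> real" where
  "fam a r p n = (\<lambda>t phi. sin t * poly p (cos t) / (a + r * cos t)^n)"

lemma poly_uP[simp]: "poly (uP a r) x = a + r * x" by (simp add: uP_def)
lemma poly_qP: "poly (qP a r p n) x = (x * poly p x - (1 - x^2) * poly (pderiv p) x) * (a + r*x)
   + real n * r * (1 - x^2) * poly p x"
  by (simp add: qP_def algebra_simps power2_eq_square)
lemma poly_TP: "poly (TP a r p n) x = (poly (pderiv (qP a r p n)) x * (a + r*x) - real n * r * poly (qP a r p n) x) / r^2"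
  unfolding TP_def by (simp add: field_simps)

lemma upos: fixes s :: real assumes "a > r" "r > 0" shows "a + r * cos s > 0"
proof -
  have "r * cos s \<ge> - r" using mult_left_mono[OF cos_ge_minus_one[of s], of r] assms by simp
  then show ?thesis using assms by linarith
qed

lemma poly_cos_deriv[derivative_intros]: fixes s :: real
  shows "E = poly (pderiv p) (cos s) * - sin s \<Longrightarrow> ((\<lambda>s. poly p (cos s)) has_real_derivative E) (at s within S)"
  using DERIV_chain2[OF poly_DERIV DERIV_cos] by (metis has_field_derivative_at_within)

lemma d1: fixes s :: real assumes "a > r" "r > 0"
  shows "((\<lambda>s. fam a r p (Suc n) s phi) has_real_derivative
     poly (qP a r p (Suc n)) (cos s) / (a + r * cos s)^(Suc (Suc n))) (at s)"
proof -
  define U where "U = a + r * cos s"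
  define P where "P = poly p (cos s)"
  define P' where "P' = poly (pderiv p) (cos s)"
  have u: "U > 0" using upos assms U_def by auto
  have s2: "(sin s)^2 = 1 - (cos s)^2" by (simp add: sin_squared_eq)
  have "((\<lambda>s. sin s * poly p (cos s) / (a + r * cos s)^(Suc n)) has_real_derivative
     ((cos s * P + sin s * (P' * - sin s)) * U^(Suc n)
      - sin s * P * (real (Suc n) * (0 + r * - sin s) * U^n)) / (U^(Suc n) * U^(Suc n))) (at s)"
  proof -
    have hA: "((\<lambda>x. sin x * poly p (cos x)) has_real_derivative cos s * P + sin s * (P' * - sin s)) (at s)"
      unfolding P_def P'_def using DERIV_mult[OF DERIV_sin poly_cos_deriv[OF refl, of p s]] by (simp add: algebra_simps)
    have hU: "((\<lambda>x. a + r * cos x) has_real_derivative 0 + r * - sin s) (at s)"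
      by (intro DERIV_add DERIV_const DERIV_cmult DERIV_cos)
    have hB: "((\<lambda>x. (a + r * cos x)^(Suc n)) has_real_derivative real (Suc n) * (0 + r * - sin s) * U^n) (at s)"
      using DERIV_power[OF hU, of "Suc n"] unfolding U_def by (simp add: mult.assoc)
    show ?thesis using DERIV_divide[OF hA hB] u unfolding U_def P_def by simp
  qed
  moreover have "((cos s * P + sin s * (P' * - sin s)) * U^(Suc n)
      - sin s * P * (real (Suc n) * (0 + r * - sin s) * U^n)) / (U^(Suc n) * U^(Suc n))
     = poly (qP a r p (Suc n)) (cos s) / U^(Suc (Suc n))"
  proof -
    define Q where "Q = poly (qP a r p (Suc n)) (cos s)"
    have Qe: "Q = (cos s * P - (sin s)^2 * P') * U + real (Suc n) * r * (sin s)^2 * P"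
      unfolding Q_def poly_qP s2 P_def P'_def U_def by simp
    have "((cos s * P + sin s * (P' * - sin s)) * U^(Suc n)
      - sin s * P * (real (Suc n) * (0 + r * - sin s) * U^n)) / (U^(Suc n) * U^(Suc n))
     = Q / U^(Suc (Suc n))"
      unfolding Qe using u by (simp add: field_simps power2_eq_square)
    then show ?thesis unfolding Q_def .
  qed
  ultimately show ?thesis unfolding fam_def U_def by simp
qed
lemma d2: fixes s :: real assumes "a > r" "r > 0"
  shows "((\<lambda>s. poly q (cos s) / (a + r * cos s)^(Suc k)) has_real_derivative
     (poly (pderiv q) (cos s) * - sin s) / (a + r * cos s)^(Suc k)
       + real (Suc k) * r * sin s * poly q (cos s) / (a + r * cos s)^(Suc (Suc k))) (at s)"
proof -
  define U where "U = a + r * cos s"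
  have u: "U > 0" using upos assms U_def by auto
  have hU: "((\<lambda>x. a + r * cos x) has_real_derivative 0 + r * - sin s) (at s)"
    by (intro DERIV_add DERIV_const DERIV_cmult DERIV_cos)
  have hB: "((\<lambda>x. (a + r * cos x)^(Suc k)) has_real_derivative real (Suc k) * (0 + r * - sin s) * U^k) (at s)"
    using DERIV_power[OF hU, of "Suc k"] unfolding U_def by (simp add: mult.assoc)
  have "((\<lambda>s. poly q (cos s) / (a + r * cos s)^(Suc k)) has_real_derivative
     ((poly (pderiv q) (cos s) * - sin s) * U^(Suc k) - poly q (cos s) * (real (Suc k) * (0 + r * - sin s) * U^k))
       / (U^(Suc k) * U^(Suc k))) (at s)"
    using DERIV_divide[OF poly_cos_deriv[OF refl, of q s] hB] u unfolding U_def by simp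
  moreover have "((poly (pderiv q) (cos s) * - sin s) * U^(Suc k) - poly q (cos s) * (real (Suc k) * (0 + r * - sin s) * U^k))
       / (U^(Suc k) * U^(Suc k)) = (poly (pderiv q) (cos s) * - sin s) / U^(Suc k)
       + real (Suc k) * r * sin s * poly q (cos s) / U^(Suc (Suc k))"
    using u by (simp add: field_simps)
  ultimately show ?thesis unfolding U_def by simp
qed

lemma lap_fam: assumes "a > r" "r > 0"
  shows "anchor_lap a r (fam a r p (Suc n)) t phi = fam a r (TP a r p (Suc n)) (Suc n + 2) t phi"
proof -
  define U where "U = a + r * cos t"
  have u: "U > 0" using upos assms U_def by auto
  have c0: "deriv (\<lambda>q. deriv (\<lambda>pp. fam a r p (Suc n) t pp) q) phi = 0"
    by (simp add: fam_def)
  have e1: "(\<lambda>s. deriv (\<lambda>u. fam a r p (Suc n) u phi) s) = (\<lambda>s. poly (qP a r p (Suc n)) (cos s) / (a + r * cos s)^(Suc (Suc n)))"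
    using DERIV_imp_deriv[OF d1[OF assms]] by blast
  have e2: "deriv (\<lambda>s. poly (qP a r p (Suc n)) (cos s) / (a + r * cos s)^(Suc (Suc n))) t
     = (poly (pderiv (qP a r p (Suc n))) (cos t) * - sin t) / U^(Suc (Suc n))
       + real (Suc (Suc n)) * r * sin t * poly (qP a r p (Suc n)) (cos t) / U^(Suc (Suc (Suc n)))"
    unfolding U_def by (rule DERIV_imp_deriv[OF d2[OF assms]])
  define Q where "Q = poly (qP a r p (Suc n)) (cos t)"
  define Q' where "Q' = poly (pderiv (qP a r p (Suc n))) (cos t)"
  have T: "poly (TP a r p (Suc n)) (cos t) = (Q' * U - real (Suc n) * r * Q) / r^2"
    unfolding poly_TP Q_def Q'_def U_def ..
  have "anchor_lap a r (fam a r p (Suc n)) t phi =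
     - (1 / U\<^sup>2) * 0 + (sin t / (r * U)) * (Q / U^(Suc (Suc n)))
     - (1 / r\<^sup>2) * ((Q' * - sin t) / U^(Suc (Suc n)) + real (Suc (Suc n)) * r * sin t * Q / U^(Suc (Suc (Suc n))))"
    unfolding anchor_lap_def c0 e1 e2 anchor_gamma_def
    using DERIV_imp_deriv[OF d1[OF assms], of p n phi t]
    by (simp add: U_def Q_def Q'_def)
  also have "\<dots> = fam a r (TP a r p (Suc n)) (Suc n + 2) t phi"
    unfolding fam_def T U_def[symmetric] using u assms by (simp add: field_simps power2_eq_square)
  finally show ?thesis .
qed

lemma lap_base: assumes "a > r" "r > 0"
  shows "anchor_lap a r (\<lambda>s p. - sin s) t phi = fam a r [:-a/r^2, -2/r:] 1 t phi"
proof -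
  define U where "U = a + r * cos t"
  have u: "U > 0" using upos assms U_def by auto
  have e1: "(\<lambda>s::real. deriv (\<lambda>u. - sin u) s) = (\<lambda>s. - cos s)"
  proof
    fix s :: real show "deriv (\<lambda>u. - sin u) s = - cos s"
      using DERIV_imp_deriv[OF DERIV_minus[OF DERIV_sin[of s]]] by simp
  qed
  have e2: "deriv (\<lambda>u::real. - cos u) t = sin t"
    using DERIV_imp_deriv[OF DERIV_minus[OF DERIV_cos[of t]]] by simp
  have "anchor_lap a r (\<lambda>s p. - sin s) t phi = (sin t / (r * U)) * (- cos t) - (1/r^2) * sin t"
    unfolding anchor_lap_def e1 e2 anchor_gamma_def U_def by simp
  also have "\<dots> = fam a r [:-a/r^2, -2/r:] 1 t phi"
  proof -
    have pe: "poly [:-a/r^2, -2/r:] (cos t) = -(U + r*cos t)/r^2"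
      using assms by (simp add: U_def field_simps power2_eq_square)
    show ?thesis unfolding fam_def pe U_def[symmetric] using u assms by (simp add: field_simps power2_eq_square)
  qed
  finally show ?thesis .
qed

fun RR :: "real \<Rightarrow> real \<Rightarrow> nat \<Rightarrow> real poly" where
  "RR a r 0 = 0"
| "RR a r (Suc 0) = [:-a/r^2, -2/r:]"
| "RR a r (Suc (Suc k)) = TP a r (RR a r (Suc k)) (Suc (2*k))"

lemma iter_R: assumes "a > r" "r > 0" "k \<ge> 1"
  shows "(anchor_lap a r ^^ k) (\<lambda>s p. - sin s) = fam a r (RR a r k) (2*k - 1)"
  using assms(3)
proof (induction k)
  case 0 then show ?case by simp
next
  case (Suc k)
  show ?case
  proof (cases k)
    case 0
    then show ?thesis using lap_base[OF assms(1,2)] by (auto intro!: ext)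
  next
    case (Suc j)
    have IH: "(anchor_lap a r ^^ k) (\<lambda>s p. - sin s) = fam a r (RR a r k) (Suc (2*j))"
      using Suc.IH Suc by simp
    show ?thesis using lap_fam[OF assms(1,2), of "RR a r k" "2*j"] Suc IH
      by (auto intro!: ext simp: numeral_eq_Suc)
  qed
qed

lemma TP_x0: assumes "r > 0"
  shows "poly (TP a r p n) (-a/r) = real n * real n * ((a/r)^2 - 1) * poly p (-a/r)"
proof -
  have z: "a + r * (-a/r) = 0" using assms by simp
  define Q where "Q = poly (qP a r p n) (-a/r)"
  have Qe: "Q = real n * r * (1 - (a/r)^2) * poly p (-a/r)"
    unfolding Q_def poly_qP z by (simp add: power2_eq_square)
  have "poly (TP a r p n) (-a/r) = - real n * r * Q / r^2"
    unfolding poly_TP z Q_def by simp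
  also have "\<dots> = real n * real n * ((a/r)^2 - 1) * poly p (-a/r)"
    unfolding Qe using assms by (simp add: field_simps power2_eq_square)
  finally show ?thesis .
qed

lemma R_nz: assumes "a > r" "r > 0" "k \<ge> 1"
  shows "poly (RR a r k) (-a/r) \<noteq> 0"
  using assms(3)
proof (induction k)
  case 0 then show ?case by simp
next
  case (Suc k)
  show ?case
  proof (cases k)
    case 0
    then show ?thesis using assms(1,2) by (simp add: field_simps power2_eq_square)
  next
    case (Suc j)
    have "a/r > 1" using assms by simp
    then have "(a/r)^2 > 1" by (simp add: one_less_power)
    then have ne: "(a/r)^2 - 1 \<noteq> 0" by simp
    have ih: "poly (RR a r k) (-a/r) \<noteq> 0" using Suc.IH Suc by simp
    have "poly (RR a r (Suc k)) (-a/r) = real (Suc (2*j)) * real (Suc (2*j)) * ((a/r)^2 - 1) * poly (RR a r k) (-a/r)"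
      unfolding Suc RR.simps by (rule TP_x0[OF assms(2)])
    then show ?thesis using ne ih by (simp only: mult_eq_0_iff) simp
  qed
qed
lemma lapV_iter: "((anchor_lapV a r ^^ k) F) s p $ i = ((anchor_lap a r ^^ k) (\<lambda>s p. F s p $ i)) s p"
proof (induction k arbitrary: s p)
  case 0 then show ?case by simp
next
  case (Suc k)
  have e: "(\<lambda>s p. ((anchor_lapV a r ^^ k) F) s p $ i) = (anchor_lap a r ^^ k) (\<lambda>s p. F s p $ i)"
    using Suc.IH by (intro ext) simp
  have step: "anchor_lapV a r G s p $ i = anchor_lap a r (\<lambda>s p. G s p $ i) s p" for G s p
    by (simp add: anchor_lapV_def)
  show ?case using step[of "(anchor_lapV a r ^^ k) F"] e by simp
qed

theorem theorem1:
  fixes a r :: real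
  assumes "a > r" and "r > 0"
  shows "\<not> (\<exists>m::nat. m \<ge> 1 \<and> (\<exists>c :: nat \<Rightarrow> real.
           \<forall>t phi. ((anchor_lapV a r ^^ m) anchor_gauss) t phi
               + (\<Sum>i = 1..m. c i *\<^sub>R ((anchor_lapV a r ^^ (m - i)) anchor_gauss) t phi) = 0))"
proof
  assume "\<exists>m::nat. m \<ge> 1 \<and> (\<exists>c :: nat \<Rightarrow> real.
           \<forall>t phi. ((anchor_lapV a r ^^ m) anchor_gauss) t phi
               + (\<Sum>i = 1..m. c i *\<^sub>R ((anchor_lapV a r ^^ (m - i)) anchor_gauss) t phi) = 0)"
  then obtain m c where m1: "m \<ge> 1" and H: "\<And>t phi. ((anchor_lapV a r ^^ m) anchor_gauss) t phi
               + (\<Sum>i = 1..m. c i *\<^sub>R ((anchor_lapV a r ^^ (m - i)) anchor_gauss) t phi) = 0"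
    by blast
  define f0 where "f0 = (\<lambda>(s::real) (p::real). - sin s)"
  define F where "F k t = (anchor_lap a r ^^ k) f0 t 0" for k t
  have g3: "(\<lambda>s p. anchor_gauss s p $ 3) = f0" unfolding f0_def anchor_gauss_def by simp
  have E: "F m t + (\<Sum>i = 1..m. c i * F (m - i) t) = 0" for t
  proof -
    have "(((anchor_lapV a r ^^ m) anchor_gauss) t 0
               + (\<Sum>i = 1..m. c i *\<^sub>R ((anchor_lapV a r ^^ (m - i)) anchor_gauss) t 0)) $ 3 = 0"
      using H[of t 0] by simp
    then show ?thesis unfolding F_def by (simp add: lapV_iter g3)
  qed
  have Fk: "F k t = sin t * poly (RR a r k) (cos t) / (a + r * cos t)^(2*k-1)" if "k \<ge> 1" for k t
    unfolding F_def f0_def iter_R[OF assms that] fam_def ..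
  have F0: "F 0 t = - sin t" for t unfolding F_def f0_def by simp
  define Big where "Big = RR a r m + (\<Sum>i\<in>{1..<m}. smult (c i) (RR a r (m-i) * uP a r ^ (2*i)))
      - smult (c m) (uP a r ^ (2*m-1))"
  have root: "poly Big x = 0" if x: "x \<in> {-1<..<1}" for x
  proof -
    define t where "t = arccos x"
    have ct: "cos t = x" using x unfolding t_def by simp
    have st: "sin t \<noteq> 0" using x unfolding t_def by (simp add: sin_arccos_nonzero)
    define U where "U = a + r * x"
    have u: "U > 0" using upos[OF assms, of t] ct U_def by simp
    have split: "{1..m} = insert m {1..<m}" using m1 by auto
    have E2: "F m t + (\<Sum>i\<in>{1..<m}. c i * F (m - i) t) + c m * F 0 t = 0"
      using E[of t] unfolding split by (simp add: algebra_simps)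
    have K: "U^(2*m-1) / sin t * (c i * F (m - i) t) = c i * (poly (RR a r (m-i)) x * U^(2*i))"
      if i: "i \<in> {1..<m}" for i
    proof -
      have ex: "2*m-1 = 2*i + (2*(m-i)-1)" using i by auto
      have pw: "U^(2*m-1) = U^(2*i) * U^(2*(m-i)-1)" unfolding ex power_add ..
      have mi: "m - i \<ge> 1" using i by auto
      have fe: "F (m - i) t = sin t * poly (RR a r (m-i)) x / U^(2*(m-i)-1)"
        using Fk[OF mi, of t] ct unfolding U_def by simp
      have "U^(2*(m-i)-1) > 0" using u by simp
      then show ?thesis unfolding pw fe using st u by (simp add: field_simps)
    qed
    have "0 = U^(2*m-1) / sin t * (F m t + (\<Sum>i\<in>{1..<m}. c i * F (m - i) t) + c m * F 0 t)"
      using E2 by simp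
    also have "\<dots> = U^(2*m-1) / sin t * F m t + (\<Sum>i\<in>{1..<m}. U^(2*m-1) / sin t * (c i * F (m - i) t))
        + U^(2*m-1) / sin t * (c m * F 0 t)"
      by (simp add: algebra_simps sum_distrib_left)
    also have "\<dots> = poly (RR a r m) x + (\<Sum>i\<in>{1..<m}. c i * (poly (RR a r (m-i)) x * U^(2*i)))
        - c m * U^(2*m-1)"
      using K Fk[OF m1, of t] F0 ct st u unfolding U_def by simp
    also have "\<dots> = poly Big x" unfolding Big_def U_def by (simp add: poly_sum)
    finally show ?thesis by simp
  qed
  have "Big = 0"
  proof (rule ccontr)
    assume "Big \<noteq> 0"
    then have "finite {x. poly Big x = 0}" by (rule poly_roots_finite)
    moreover have "{-1<..<(1::real)} \<subseteq> {x. poly Big x = 0}" using root by blast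
    ultimately have "finite {-1<..<(1::real)}" by (rule finite_subset[rotated])
    then show False using infinite_Ioo[of "-1" "1::real"] by simp
  qed
  then have "poly Big (-a/r) = 0" by simp
  moreover have "poly (uP a r) (-a/r) = 0" using assms by simp
  moreover have "(\<Sum>i\<in>{1..<m}. c i * (poly (RR a r (m - i)) (-a/r) * (0::real) ^ (2 * i))) = 0"
    by (rule sum.neutral) auto
  moreover have "(0::real) ^ (2 * m - 1) = 0" using m1 by simp
  ultimately have "poly (RR a r m) (-a/r) = 0"
    unfolding Big_def by (simp add: poly_sum)
  then show False using R_nz[OF assms m1] by simp
qed
end
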